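(* Let $\alpha_1,\alpha_2,\alpha_0,\beta_0$ be nonzero real constants with $\alpha_1\beta_0^2=\alpha_2\alpha_0^2$, and consider the lattice Schwarzian KdV equation for $u_{n,m}$, $(n,m)\in\mathbb{Z}^2$: $$\mathbb{Q}\equiv\alpha_1 (u_{n,m}-u_{n,m+1}-\beta_0)(u_{n+1,m}-u_{n+1,m+1}-\beta_0)-\alpha_2 (u_{n,m}-u_{n+1,m}-\alpha_0)(u_{n,m+1}-u_{n+1,m+1}-\alpha_0)=0.$$ Then the non-autonomous generator $G_{n,m}\,\partial_{u_{n,m}}$ with $$G_{n,m}=\frac{4n(u_{n,m}-u_{n-1,m}+\alpha_0)(u_{n,m}-u_{n+1,m}-\alpha_0)}{u_{n+1,m}-u_{n-1,m}+2\alpha_0}+\frac{4m(u_{n,m}-u_{n,m-1}+\beta_0)(u_{n,m}-u_{n,m+1}-\beta_0)}{u_{n,m+1}-u_{n,m-1}+2\beta_0}$$ is a generalized symmetry of $\mathbb{Q}=0$.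
   Context: A generator $G_{n,m}\partial_{u_{n,m}}$, where $G_{n,m}$ is a function of finitely many values $u_{n+i,m+j}$ (and possibly of $n,m$), and $G_{n+i,m+j}$ denotes the same expression with all indices shifted (including the explicit factors $n$, $m$, which become $n+i$, $m+j$), is called a generalized symmetry of $\mathbb{Q}(u_{n,m},u_{n+1,m},u_{n,m+1},u_{n+1,m+1})=0$ if $$G_{n,m}\frac{\partial \mathbb{Q}}{\partial u_{n,m}}+G_{n+1,m}\frac{\partial \mathbb{Q}}{\partial u_{n+1,m}}+G_{n,m+1}\frac{\partial \mathbb{Q}}{\partial u_{n,m+1}}+G_{n+1,m+1}\frac{\partial \mathbb{Q}}{\partial u_{n+1,m+1}}=0$$ at every $(n,m)$ for every solution $u$ of the lattice equation on $\mathbb{Z}^2$ for which all denominators involved are nonzero (equivalently, the expression vanishes modulo the equation and its shifts). *)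

theory Defs
  imports "HOL-Analysis.Analysis"
begin

text \<open>The lattice Schwarzian KdV quad-equation
  Q(x, x1, x2, x12), where x = u(n,m), x1 = u(n+1,m), x2 = u(n,m+1), x12 = u(n+1,m+1).\<close>
definition QSKdV :: "real \<Rightarrow> real \<Rightarrow> real \<Rightarrow> real \<Rightarrow> real \<Rightarrow> real \<Rightarrow> real \<Rightarrow> real \<Rightarrow> real" where
  "QSKdV a1 a2 a0 b0 x x1 x2 x12 =
     a1 * (x - x2 - b0) * (x1 - x12 - b0) - a2 * (x - x1 - a0) * (x2 - x12 - a0)"

definition Gsym :: "real \<Rightarrow> real \<Rightarrow> (int \<Rightarrow> int \<Rightarrow> real) \<Rightarrow> int \<Rightarrow> int \<Rightarrow> real" where
  "Gsym a0 b0 u n m =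
     4 * of_int n * (u n m - u (n - 1) m + a0) * (u n m - u (n + 1) m - a0)
       / (u (n + 1) m - u (n - 1) m + 2 * a0)
   + 4 * of_int m * (u n m - u n (m - 1) + b0) * (u n m - u n (m + 1) - b0)
       / (u n (m + 1) - u n (m - 1) + 2 * b0)"

definition Gden_ok :: "real \<Rightarrow> real \<Rightarrow> (int \<Rightarrow> int \<Rightarrow> real) \<Rightarrow> int \<Rightarrow> int \<Rightarrow> bool" where
  "Gden_ok a0 b0 u n m \<longleftrightarrow>
     u (n + 1) m - u (n - 1) m + 2 * a0 \<noteq> 0 \<and> u n (m + 1) - u n (m - 1) + 2 * b0 \<noteq> 0"

end

theory Submission
  imports Defs
begin

lemma combine:
  fixes c A1 A2 X1 X2 D1 D2 K :: real
  assumes c: "c \<noteq> 0" and d1: "D1 \<noteq> 0" and d2: "D2 \<noteq> 0"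
    and e: "c*(A1*D2*X1 + A2*D1*X2) = c*(K*D1*D2)"
  shows "A1/D1*X1 + A2/D2*X2 = K"
proof -
  have h: "A1*D2*X1 + A2*D1*X2 = K*D1*D2" using e c mult_left_cancel by blast
  have "A1/D1*X1 + A2/D2*X2 = (A1*D2*X1 + A2*D1*X2)/(D1*D2)"
    using d1 d2 by (simp add: field_simps)
  also have "\<dots> = K*(D1*D2)/(D1*D2)" unfolding h by (simp only: mult.assoc)
  also have "\<dots> = K" by (rule nonzero_mult_div_cancel_right) (use d1 d2 in simp)
  finally show ?thesis .
qed

lemma sideL:
  fixes a1 a2 a0 b0 x x1 x2 x12 L Lt :: real
  assumes QL: "QSKdV a1 a2 a0 b0 L x Lt x2 = 0" and QC: "QSKdV a1 a2 a0 b0 x x1 x2 x12 = 0"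
   and d1: "x1 - L + 2*a0 \<noteq> 0" and d2: "x12 - Lt + 2*a0 \<noteq> 0" and a2: "a2 \<noteq> 0"
  shows "(x-L+a0)*(x-x1-a0)/(x1-L+2*a0) * (a1*(x1-x12-b0) - a2*(x2-x12-a0))
       + (x2-Lt+a0)*(x2-x12-a0)/(x12-Lt+2*a0) * (-a1*(x1-x12-b0) - a2*(x-x1-a0))
       = -a2*(x-x1-a0)*(x2-x12-a0)"
  apply (rule combine[OF a2 d1 d2])
  using QL QC unfolding QSKdV_def by algebra

lemma sideR:
  fixes a1 a2 a0 b0 x x1 x2 x12 R Rt :: real
  assumes QR: "QSKdV a1 a2 a0 b0 x1 R x12 Rt = 0" and QC: "QSKdV a1 a2 a0 b0 x x1 x2 x12 = 0"
   and d1: "R - x + 2*a0 \<noteq> 0" and d2: "Rt - x2 + 2*a0 \<noteq> 0" and a2: "a2 \<noteq> 0"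
  shows "(x1-x+a0)*(x1-R-a0)/(R-x+2*a0) * (a1*(x-x2-b0) + a2*(x2-x12-a0))
       + (x12-x2+a0)*(x12-Rt-a0)/(Rt-x2+2*a0) * (-a1*(x-x2-b0) + a2*(x-x1-a0))
       = a2*(x-x1-a0)*(x2-x12-a0)"
  apply (rule combine[OF a2 d1 d2])
  using QR QC unfolding QSKdV_def by algebra

lemma sideB:
  fixes a1 a2 a0 b0 x x1 x2 x12 B B1 :: real
  assumes QB: "QSKdV a1 a2 a0 b0 B B1 x x1 = 0" and QC: "QSKdV a1 a2 a0 b0 x x1 x2 x12 = 0"
   and d1: "x2 - B + 2*b0 \<noteq> 0" and d2: "x12 - B1 + 2*b0 \<noteq> 0" and a1: "a1 \<noteq> 0"
  shows "(x-B+b0)*(x-x2-b0)/(x2-B+2*b0) * (a1*(x1-x12-b0) - a2*(x2-x12-a0))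
       + (x1-B1+b0)*(x1-x12-b0)/(x12-B1+2*b0) * (a1*(x-x2-b0) + a2*(x2-x12-a0))
       = a2*(x-x1-a0)*(x2-x12-a0)"
  apply (rule combine[OF a1 d1 d2])
  using QB QC unfolding QSKdV_def by algebra

lemma sideT:
  fixes a1 a2 a0 b0 x x1 x2 x12 T T1 :: real
  assumes QT: "QSKdV a1 a2 a0 b0 x2 x12 T T1 = 0" and QC: "QSKdV a1 a2 a0 b0 x x1 x2 x12 = 0"
   and d1: "T - x + 2*b0 \<noteq> 0" and d2: "T1 - x1 + 2*b0 \<noteq> 0" and a1: "a1 \<noteq> 0"
  shows "(x2-x+b0)*(x2-T-b0)/(T-x+2*b0) * (-a1*(x1-x12-b0) - a2*(x-x1-a0))
       + (x12-x1+b0)*(x12-T1-b0)/(T1-x1+2*b0) * (-a1*(x-x2-b0) + a2*(x-x1-a0))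
       = -a2*(x-x1-a0)*(x2-x12-a0)"
  apply (rule combine[OF a1 d1 d2])
  using QT QC unfolding QSKdV_def by algebra

lemma dQ0: "deriv (\<lambda>x. QSKdV a1 a2 a0 b0 x x1 x2 x12) y = a1*(x1-x12-b0) - a2*(x2-x12-a0)"
  unfolding QSKdV_def
  by (rule DERIV_imp_deriv) (rule derivative_eq_intros refl | simp add: algebra_simps)+

lemma dQ1: "deriv (\<lambda>x1. QSKdV a1 a2 a0 b0 x x1 x2 x12) y = a1*(x-x2-b0) + a2*(x2-x12-a0)"
  unfolding QSKdV_def
  by (rule DERIV_imp_deriv) (rule derivative_eq_intros refl | simp add: algebra_simps)+

lemma dQ2: "deriv (\<lambda>x2. QSKdV a1 a2 a0 b0 x x1 x2 x12) y = -a1*(x1-x12-b0) - a2*(x-x1-a0)"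
  unfolding QSKdV_def
  by (rule DERIV_imp_deriv) (rule derivative_eq_intros refl | simp add: algebra_simps)+

lemma dQ3: "deriv (\<lambda>x12. QSKdV a1 a2 a0 b0 x x1 x2 x12) y = -a1*(x-x2-b0) + a2*(x-x1-a0)"
  unfolding QSKdV_def
  by (rule DERIV_imp_deriv) (rule derivative_eq_intros refl | simp add: algebra_simps)+

definition gN :: "real \<Rightarrow> (int \<Rightarrow> int \<Rightarrow> real) \<Rightarrow> int \<Rightarrow> int \<Rightarrow> real" where
  "gN a0 u k l = (u k l - u (k - 1) l + a0) * (u k l - u (k + 1) l - a0) / (u (k + 1) l - u (k - 1) l + 2 * a0)"

definition gM :: "real \<Rightarrow> (int \<Rightarrow> int \<Rightarrow> real) \<Rightarrow> int \<Rightarrow> int \<Rightarrow> real" where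
  "gM b0 u k l = (u k l - u k (l - 1) + b0) * (u k l - u k (l + 1) - b0) / (u k (l + 1) - u k (l - 1) + 2 * b0)"

lemma Gsym_split: "Gsym a0 b0 u k l = 4 * of_int k * gN a0 u k l + 4 * of_int l * gM b0 u k l"
  unfolding Gsym_def gN_def gM_def by simp

lemma final:
  fixes n m gA gB gC gD hA hB hC hD Q0 Q1 Q2 Q3 K :: real
  assumes "gA*Q0 + gB*Q2 = K" "gC*Q1 + gD*Q3 = -K" "hA*Q0 + hC*Q1 = -K" "hB*Q2 + hD*Q3 = K"
  shows "(4*n*gA + 4*m*hA)*Q0 + (4*(n+1)*gC + 4*m*hC)*Q1 + (4*n*gB + 4*(m+1)*hB)*Q2
     + (4*(n+1)*gD + 4*(m+1)*hD)*Q3 = 0"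
proof -
  have "(4*n*gA + 4*m*hA)*Q0 + (4*(n+1)*gC + 4*m*hC)*Q1 + (4*n*gB + 4*(m+1)*hB)*Q2
     + (4*(n+1)*gD + 4*(m+1)*hD)*Q3 = 4*n*(gA*Q0 + gB*Q2) + 4*(n+1)*(gC*Q1 + gD*Q3)
     + 4*m*(hA*Q0 + hC*Q1) + 4*(m+1)*(hB*Q2 + hD*Q3)" by (simp add: algebra_simps)
  also have "\<dots> = 0" unfolding assms by (simp add: algebra_simps)
  finally show ?thesis .
qed

theorem mainTheorem4:
  fixes a1 a2 a0 b0 :: real and u :: "int \<Rightarrow> int \<Rightarrow> real" and n m :: int
  assumes "a1 \<noteq> 0" and "a2 \<noteq> 0" and "a0 \<noteq> 0" and "b0 \<noteq> 0"
    and "a1 * b0^2 = a2 * a0^2"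
    and sol: "\<forall>k l. QSKdV a1 a2 a0 b0 (u k l) (u (k + 1) l) (u k (l + 1)) (u (k + 1) (l + 1)) = 0"
    and "Gden_ok a0 b0 u n m" and "Gden_ok a0 b0 u (n + 1) m"
    and "Gden_ok a0 b0 u n (m + 1)" and "Gden_ok a0 b0 u (n + 1) (m + 1)"
  shows "Gsym a0 b0 u n m
           * deriv (\<lambda>x. QSKdV a1 a2 a0 b0 x (u (n + 1) m) (u n (m + 1)) (u (n + 1) (m + 1))) (u n m)
       + Gsym a0 b0 u (n + 1) m
           * deriv (\<lambda>x. QSKdV a1 a2 a0 b0 (u n m) x (u n (m + 1)) (u (n + 1) (m + 1))) (u (n + 1) m)
       + Gsym a0 b0 u n (m + 1)
           * deriv (\<lambda>x. QSKdV a1 a2 a0 b0 (u n m) (u (n + 1) m) x (u (n + 1) (m + 1))) (u n (m + 1))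
       + Gsym a0 b0 u (n + 1) (m + 1)
           * deriv (\<lambda>x. QSKdV a1 a2 a0 b0 (u n m) (u (n + 1) m) (u n (m + 1)) x) (u (n + 1) (m + 1))
       = 0"
proof -
  have a1: "a1 \<noteq> 0" and a2: "a2 \<noteq> 0" using assms(1,2) .
  have c1: "n + 1 - 1 = n" "m + 1 - 1 = m" by simp_all
  note dn = assms(7-10)[unfolded Gden_ok_def c1]
  have QC: "QSKdV a1 a2 a0 b0 (u n m) (u (n + 1) m) (u n (m + 1)) (u (n + 1) (m + 1)) = 0"
    using sol by blast
  have QL: "QSKdV a1 a2 a0 b0 (u (n - 1) m) (u n m) (u (n - 1) (m + 1)) (u n (m + 1)) = 0"
    using sol[rule_format, of "n - 1" m] by simp
  have QR: "QSKdV a1 a2 a0 b0 (u (n + 1) m) (u (n + 1 + 1) m) (u (n + 1) (m + 1)) (u (n + 1 + 1) (m + 1)) = 0"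
    using sol by blast
  have QB: "QSKdV a1 a2 a0 b0 (u n (m - 1)) (u (n + 1) (m - 1)) (u n m) (u (n + 1) m) = 0"
    using sol[rule_format, of n "m - 1"] by simp
  have QT: "QSKdV a1 a2 a0 b0 (u n (m + 1)) (u (n + 1) (m + 1)) (u n (m + 1 + 1)) (u (n + 1) (m + 1 + 1)) = 0"
    using sol by blast
  have sL: "gN a0 u n m * (a1*(u (n + 1) m - u (n + 1) (m + 1) - b0) - a2*(u n (m + 1) - u (n + 1) (m + 1) - a0))
     + gN a0 u n (m + 1) * (-a1*(u (n + 1) m - u (n + 1) (m + 1) - b0) - a2*(u n m - u (n + 1) m - a0))
     = -a2*(u n m - u (n + 1) m - a0)*(u n (m + 1) - u (n + 1) (m + 1) - a0)"
    unfolding gN_def c1 using sideL[OF QL QC _ _ a2] dn by auto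
  have sR: "gN a0 u (n + 1) m * (a1*(u n m - u n (m + 1) - b0) + a2*(u n (m + 1) - u (n + 1) (m + 1) - a0))
     + gN a0 u (n + 1) (m + 1) * (-a1*(u n m - u n (m + 1) - b0) + a2*(u n m - u (n + 1) m - a0))
     = -(-a2*(u n m - u (n + 1) m - a0)*(u n (m + 1) - u (n + 1) (m + 1) - a0))"
    unfolding gN_def c1 using sideR[OF QR QC _ _ a2] dn by auto
  have sB: "gM b0 u n m * (a1*(u (n + 1) m - u (n + 1) (m + 1) - b0) - a2*(u n (m + 1) - u (n + 1) (m + 1) - a0))
     + gM b0 u (n + 1) m * (a1*(u n m - u n (m + 1) - b0) + a2*(u n (m + 1) - u (n + 1) (m + 1) - a0))
     = -(-a2*(u n m - u (n + 1) m - a0)*(u n (m + 1) - u (n + 1) (m + 1) - a0))"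
    unfolding gM_def c1 using sideB[OF QB QC _ _ a1] dn by auto
  have sT: "gM b0 u n (m + 1) * (-a1*(u (n + 1) m - u (n + 1) (m + 1) - b0) - a2*(u n m - u (n + 1) m - a0))
     + gM b0 u (n + 1) (m + 1) * (-a1*(u n m - u n (m + 1) - b0) + a2*(u n m - u (n + 1) m - a0))
     = -a2*(u n m - u (n + 1) m - a0)*(u n (m + 1) - u (n + 1) (m + 1) - a0)"
    unfolding gM_def c1 using sideT[OF QT QC _ _ a1] dn by auto
  show ?thesis
    unfolding Gsym_split dQ0 dQ1 dQ2 dQ3 of_int_add of_int_1
    by (rule final[OF sL sR sB sT])
qed

end
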